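(* Let $D$ be a Dyck path of semilength $n$ and $\pi$ the permutation associated with $D$ by the Billey–Jockusch–Stanley bijection. Then for $k\in\{1,\dots,n\}$, $\pi(k)=k$ if and only if $D$ has no valley at any position $(i,j)$ with $i\le k$ and $j\ge k$.
   Context: Work in an $n\times n$ array of unit cells; the cell $(i,j)$ is the one in column $i$ (columns numbered $1,\dots,n$ from left to right) and row $j$ (rows numbered $1,\dots,n$ from bottom to top), i.e. the square $[i-1,i]\times[j-1,j]$. A Dyck path of semilength $n$ is a lattice path from $(0,0)$ to $(n,n)$ with unit north and east steps that never goes below the line $y=x$. A valley of $D$ is an east step immediately followed by a north step; if the east step is the $k$-th east step and the north step is the $\ell$-th north step of $D$, the valley is said to be at position $(k,\ell)$, namely the cell enclosed by these two steps. Billey–Jockusch–Stanley bijection: put a cross in every valley cell of $D$; then, for the columns $i=1,2,\dots,n$ in this order, if column $i$ does not yet contain a cross, put a cross in the lowest cell of column $i$whose row does not yet contain a cross. The crosses form a permutation matrix, and $\pi(i)$ is the row of the cross in column $i$. *)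

theory Defs
  imports Main
begin

text \<open>A lattice path is a list of steps: True = north step, False = east step.\<close>

definition north_steps :: "bool list \<Rightarrow> nat" where
  "north_steps xs = length (filter (\<lambda>s. s) xs)"

definition east_steps :: "bool list \<Rightarrow> nat" where
  "east_steps xs = length (filter (\<lambda>s. \<not> s) xs)"

definition dyck_path :: "nat \<Rightarrow> bool list \<Rightarrow> bool" where
  "dyck_path n D \<longleftrightarrow> length D = 2 * n \<and> north_steps D = n \<and> east_steps D = n \<and>
     (\<forall>m \<le> length D. east_steps (take m D) \<le> north_steps (take m D))"

text \<open>Valleys: an east step (the k-th east step) at index p immediately followed by a
  north step (the l-th north step); the valley is at position (k,l).\<close>
definition valleys :: "bool list \<Rightarrow> (nat \<times> nat) set" where
  "valleys D = {(east_steps (take (p + 1) D), north_steps (take (p + 2) D)) | p.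
       p + 1 < length D \<and> \<not> D ! p \<and> D ! (p + 1)}"

definition bjs_step :: "nat \<Rightarrow> (nat \<times> nat) set \<Rightarrow> nat \<Rightarrow> (nat \<times> nat) set" where
  "bjs_step n S i =
     (if \<exists>j. (i, j) \<in> S then S
      else insert (i, LEAST j. 1 \<le> j \<and> j \<le> n \<and> (\<forall>i'. (i', j) \<notin> S)) S)"

definition bjs_crosses :: "nat \<Rightarrow> bool list \<Rightarrow> (nat \<times> nat) set" where
  "bjs_crosses n D = foldl (bjs_step n) (valleys D) [1..<n + 1]"

text \<open>pi(i) is the row of the cross in column i.\<close>
definition bjs_perm :: "nat \<Rightarrow> bool list \<Rightarrow> nat \<Rightarrow> nat" where
  "bjs_perm n D i = (THE j. (i, j) \<in> bjs_crosses n D)"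

end

theory Submission
  imports Defs
begin

lemma ss_nth_less:
  fixes L :: "nat list"
  assumes "sorted_wrt (<) L" "i < length L" "j < length L"
  shows "L!i < L!j \<longleftrightarrow> i < j"
proof
  assume "L!i < L!j"
  show "i < j"
  proof (rule ccontr)
    assume "\<not> i < j"
    then have "j < i \<or> j = i" by auto
    then show False
      using sorted_wrt_nth_less[OF assms(1), of j i] assms \<open>L!i < L!j\<close> by auto
  qed
next
  assume "i < j" then show "L!i < L!j" using sorted_wrt_nth_less[OF assms(1)] assms by auto
qed

lemma inv:
  fixes V :: "(nat\<times>nat) set"
  assumes Vsub: "V \<subseteq> {1..n} \<times> {1..n}" and injf: "inj_on fst V" and injs: "inj_on snd V"
  and C_def: "C = {1..n} - fst`V" and R_def: "R = {1..n} - snd`V"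
  and Cl_def: "Cl = sorted_list_of_set C" and Rl_def: "Rl = sorted_list_of_set R"
  shows "m \<le> n \<Longrightarrow> foldl (bjs_step n) V [1..<m+1] = V \<union> {(Cl!i, Rl!i) | i. i < length Cl \<and> Cl!i \<le> m}"
proof (induction m)
  have finC: "finite C" and finR: "finite R" using C_def R_def by auto
  have setC: "set Cl = C" using Cl_def finC by simp
  have setR: "set Rl = R" using Rl_def finR by simp
  have sC: "sorted_wrt (<) Cl" using Cl_def by (simp add: strict_sorted_list_of_set)
  have sR: "sorted_wrt (<) Rl" using Rl_def by (simp add: strict_sorted_list_of_set)
  have dC: "distinct Cl" using Cl_def by simp
  have dR: "distinct Rl" using Rl_def by simp
  have finV: "finite V" using Vsub finite_subset by blast
  have "card (fst`V) = card V" using injf card_image by blast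
  moreover have "card (snd`V) = card V" using injs card_image by blast
  moreover have "fst`V \<subseteq> {1..n}" "snd`V \<subseteq> {1..n}" using Vsub by auto
  ultimately have lenCR: "length Rl = length Cl"
    using Cl_def Rl_def C_def R_def finC finR
    by (simp add: card_Diff_subset finite_subset)
  have Cmem: "\<And>i. i < length Cl \<Longrightarrow> Cl!i \<in> C" using setC nth_mem by blast
  have Rmem: "\<And>i. i < length Rl \<Longrightarrow> Rl!i \<in> R" using setR nth_mem by blast
  {
  case 0
  have "\<And>i. i < length Cl \<Longrightarrow> Cl!i \<ge> 1" using Cmem C_def by fastforce
  then show ?case by fastforce
  }
  {
  case (Suc m)
  let ?P = "\<lambda>m. {(Cl!i, Rl!i) | i. i < length Cl \<and> Cl!i \<le> m}"
  have IH: "foldl (bjs_step n) V [1..<m+1] = V \<union> ?P m" using Suc by simp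
  have "[1..<Suc m + 1] = [1..<m+1] @ [m+1]" by simp
  then have F: "foldl (bjs_step n) V [1..<Suc m+1] = bjs_step n (V \<union> ?P m) (m+1)"
    using IH by simp
  show ?case
  proof (cases "m+1 \<in> fst`V")
    case True
    then obtain j where "(m+1, j) \<in> V" by force
    then have "bjs_step n (V \<union> ?P m) (m+1) = V \<union> ?P m" unfolding bjs_step_def by auto
    moreover have "?P m = ?P (Suc m)"
    proof -
      have "\<And>i. i < length Cl \<Longrightarrow> Cl!i \<noteq> Suc m" using Cmem C_def True by (metis Diff_iff Suc_eq_plus1)
      then have "\<And>i. i < length Cl \<Longrightarrow> Cl!i \<le> Suc m \<longleftrightarrow> Cl!i \<le> m" by (metis le_Suc_eq)
      then show ?thesis by blast
    qed
    ultimately show ?thesis using F by simp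
  next
    case False
    then have "m+1 \<in> C" using C_def Suc.prems by auto
    then obtain r where r: "r < length Cl" "Cl!r = m+1" using setC by (metis in_set_conv_nth)
    have idx: "\<And>i. i < length Cl \<Longrightarrow> Cl!i \<le> m \<longleftrightarrow> i < r"
      using ss_nth_less[OF sC _ r(1)] r(2) by (metis Suc_eq_plus1 less_Suc_eq_le)
    have Pm: "?P m = {(Cl!i, Rl!i) | i. i < r}" using idx r(1) by (auto; metis less_trans)
    have idx2: "\<And>i. i < length Cl \<Longrightarrow> Cl!i \<le> Suc m \<longleftrightarrow> i \<le> r"
      using ss_nth_less[OF sC _ r(1)] r(2) nth_eq_iff_index_eq[OF dC _ r(1)]
      by (metis Suc_eq_plus1 le_eq_less_or_eq less_Suc_eq_le)
    have PSm: "?P (Suc m) = insert (Cl!r, Rl!r) (?P m)"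
      using idx idx2 r(1) by (auto; metis le_eq_less_or_eq le_less_trans less_imp_le_nat)
    have noc: "\<not> (\<exists>j. (m+1, j) \<in> V \<union> ?P m)"
    proof
      assume "\<exists>j. (m+1, j) \<in> V \<union> ?P m"
      then obtain j where "(m+1, j) \<in> V \<or> (m+1, j) \<in> ?P m" by blast
      then show False
      proof
        assume "(m+1,j) \<in> V" then show False using False by force
      next
        assume "(m+1, j) \<in> ?P m"
        then obtain i where "i < r" "Cl!i = m+1" using Pm by auto
        then show False using r nth_eq_iff_index_eq[OF dC, of i r] by auto
      qed
    qed
    have rR: "r < length Rl" using lenCR r by simp
    have least: "(LEAST j. 1 \<le> j \<and> j \<le> n \<and> (\<forall>i'. (i', j) \<notin> V \<union> ?P m)) = Rl!r"
    proof (rule Least_equality)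
      have "Rl!r \<in> R" using Rmem rR .
      moreover have "\<forall>i'. (i', Rl!r) \<notin> V"
        using \<open>Rl!r \<in> R\<close> R_def by force
      moreover have "\<forall>i'. (i', Rl!r) \<notin> ?P m"
      proof (intro allI notI)
        fix i' assume "(i', Rl!r) \<in> ?P m"
        then obtain i where "i < r" "Rl!i = Rl!r" using Pm by auto
        then show False using nth_eq_iff_index_eq[OF dR, of i r] rR by auto
      qed
      ultimately show "1 \<le> Rl!r \<and> Rl!r \<le> n \<and> (\<forall>i'. (i', Rl!r) \<notin> V \<union> ?P m)"
        using R_def by auto
    next
      fix y assume y: "1 \<le> y \<and> y \<le> n \<and> (\<forall>i'. (i', y) \<notin> V \<union> ?P m)"
      then have "y \<in> R" using R_def by force
      then obtain t where t: "t < length Rl" "Rl!t = y" using setR by (metis in_set_conv_nth)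
      have "\<not> t < r" using y t Pm lenCR r(1) by auto
      then show "Rl!r \<le> y" using ss_nth_less[OF sR rR t(1)] t(2) by (cases "t = r") auto
    qed
    have "bjs_step n (V \<union> ?P m) (m+1) = insert (m+1, Rl!r) (V \<union> ?P m)"
      unfolding bjs_step_def by (subst if_not_P[OF noc], subst least, rule refl)
    then show ?thesis using F PSm r(2) by simp
  qed
  }
qed


lemma cnt_take_le: "length (filter P (take m xs)) \<le> length (filter P xs)"
proof -
  have "xs = take m xs @ drop m xs" by simp
  then have "length (filter P xs) = length (filter P (take m xs)) + length (filter P (drop m xs))"
    by (metis filter_append length_append)
  then show ?thesis by simp
qed

lemma cnt_take_mono: "m \<le> m' \<Longrightarrow> length (filter P (take m xs)) \<le> length (filter P (take m' xs))"
  using cnt_take_le[of P m "take m' xs"] by (simp add: min_absorb1)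

lemma cnt_take_Suc: "p < length xs \<Longrightarrow>
   length (filter P (take (Suc p) xs)) = length (filter P (take p xs)) + (if P (xs!p) then 1 else 0)"
  by (simp add: take_Suc_conv_app_nth)

definition vx :: "bool list \<Rightarrow> nat \<Rightarrow> nat" where "vx D p = east_steps (take (p+1) D)"
definition vy :: "bool list \<Rightarrow> nat \<Rightarrow> nat" where "vy D p = north_steps (take (p+2) D)"
definition isv :: "bool list \<Rightarrow> nat \<Rightarrow> bool" where "isv D p \<longleftrightarrow> p + 1 < length D \<and> \<not> D ! p \<and> D ! (p + 1)"

lemma valleys_alt: "(i,j) \<in> valleys D \<longleftrightarrow> (\<exists>p. isv D p \<and> i = vx D p \<and> j = vy D p)"
  unfolding valleys_def vx_def vy_def isv_def by auto

lemma vx_eq: "isv D p \<Longrightarrow> vx D p = east_steps (take p D) + 1"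
  unfolding vx_def isv_def east_steps_def using cnt_take_Suc[of p D "\<lambda>s. \<not> s"] by simp

lemma vy_eq: "isv D p \<Longrightarrow> vy D p = north_steps (take p D) + 1"
proof -
  assume a: "isv D p"
  then have "north_steps (take (Suc p) D) = north_steps (take p D)"
    unfolding isv_def north_steps_def using cnt_take_Suc[of p D "\<lambda>s. s"] by simp
  moreover have "north_steps (take (Suc (Suc p)) D) = north_steps (take (Suc p) D) + 1"
    using a unfolding isv_def north_steps_def using cnt_take_Suc[of "Suc p" D "\<lambda>s. s"] by simp
  ultimately show ?thesis unfolding vy_def by simp
qed

lemma vprop:
  assumes "dyck_path n D" "isv D p"
  shows "1 \<le> vx D p \<and> vx D p < vy D p \<and> vy D p \<le> n"
proof -
  have "east_steps (take (p+1) D) \<le> north_steps (take (p+1) D)"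
    using assms unfolding dyck_path_def isv_def by auto
  moreover have "north_steps (take (Suc p) D) = north_steps (take p D)"
    using assms(2) unfolding isv_def north_steps_def using cnt_take_Suc[of p D "\<lambda>s. s"] by simp
  moreover have "vy D p \<le> north_steps D" unfolding vy_def north_steps_def by (rule cnt_take_le)
  ultimately show ?thesis using assms vx_eq vy_eq unfolding vx_def dyck_path_def by auto
qed

lemma vmono:
  assumes "isv D p" "isv D q" "p < q"
  shows "vx D p < vx D q \<and> vy D p < vy D q"
proof -
  have "vx D p \<le> east_steps (take q D)" unfolding vx_def east_steps_def
    using cnt_take_mono[of "Suc p" q] assms(3) by simp
  moreover have "vy D p \<le> north_steps (take q D)" unfolding vy_def north_steps_def
  proof -
    have "q \<noteq> p + 1" using assms(1,2) unfolding isv_def by auto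
    then have "p + 2 \<le> q" using assms(3) by simp
    then show "length (filter (\<lambda>s. s) (take (p + 2) D)) \<le> length (filter (\<lambda>s. s) (take q D))"
      by (rule cnt_take_mono)
  qed
  ultimately show ?thesis using vx_eq[OF assms(2)] vy_eq[OF assms(2)] by simp
qed

lemma vinj:
  assumes "isv D p" "isv D q" "vx D p = vx D q \<or> vy D p = vy D q"
  shows "p = q"
  using vmono[OF assms(1,2)] vmono[OF assms(2,1)] assms(3) by (metis less_irrefl nat_neq_iff)

lemma inj_fst: "inj_on fst (valleys D)"
proof (rule inj_onI)
  fix x y assume "x \<in> valleys D" "y \<in> valleys D" "fst x = fst y"
  then obtain p q where "isv D p" "x = (vx D p, vy D p)" "isv D q" "y = (vx D q, vy D q)"
  proof -
    assume r: "\<And>p q. isv D p \<Longrightarrow> x = (vx D p, vy D p) \<Longrightarrow> isv D q \<Longrightarrow> y = (vx D q, vy D q) \<Longrightarrow> thesis"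
    obtain p where "isv D p" "fst x = vx D p" "snd x = vy D p"
      using valleys_alt[of "fst x" "snd x" D] \<open>x \<in> valleys D\<close> by auto
    moreover obtain q where "isv D q" "fst y = vx D q" "snd y = vy D q"
      using valleys_alt[of "fst y" "snd y" D] \<open>y \<in> valleys D\<close> by auto
    ultimately show thesis using r[of p q] by (metis prod.collapse)
  qed
  then show "x = y" using vinj \<open>fst x = fst y\<close> by auto
qed

lemma inj_snd: "inj_on snd (valleys D)"
proof (rule inj_onI)
  fix x y assume "x \<in> valleys D" "y \<in> valleys D" "snd x = snd y"
  then obtain p q where "isv D p" "x = (vx D p, vy D p)" "isv D q" "y = (vx D q, vy D q)"
  proof -
    assume r: "\<And>p q. isv D p \<Longrightarrow> x = (vx D p, vy D p) \<Longrightarrow> isv D q \<Longrightarrow> y = (vx D q, vy D q) \<Longrightarrow> thesis"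
    obtain p where "isv D p" "fst x = vx D p" "snd x = vy D p"
      using valleys_alt[of "fst x" "snd x" D] \<open>x \<in> valleys D\<close> by auto
    moreover obtain q where "isv D q" "fst y = vx D q" "snd y = vy D q"
      using valleys_alt[of "fst y" "snd y" D] \<open>y \<in> valleys D\<close> by auto
    ultimately show thesis using r[of p q] by (metis prod.collapse)
  qed
  then show "x = y" using vinj \<open>snd x = snd y\<close> by auto
qed

lemma vprop2: "dyck_path n D \<Longrightarrow> (i,j) \<in> valleys D \<Longrightarrow> 1 \<le> i \<and> i < j \<and> j \<le> n"
proof -
  assume a: "dyck_path n D" "(i,j) \<in> valleys D"
  then obtain p where "isv D p" "i = vx D p" "j = vy D p" using valleys_alt by blast
  then show ?thesis using vprop[OF a(1)] by blast
qed


lemma idx_card: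
  fixes L :: "nat list"
  assumes "sorted_wrt (<) L" "t < length L"
  shows "card {x \<in> set L. x < L!t} = t"
proof -
  have eq: "{x \<in> set L. x < L!t} = (\<lambda>i. L!i) ` {..<t}"
  proof
    show "{x \<in> set L. x < L!t} \<subseteq> (\<lambda>i. L!i) ` {..<t}"
    proof
      fix x assume "x \<in> {x \<in> set L. x < L!t}"
      then obtain i where "i < length L" "L!i = x" "x < L!t" by (auto simp: in_set_conv_nth)
      then show "x \<in> (\<lambda>i. L!i) ` {..<t}" using ss_nth_less[OF assms(1) _ assms(2)] by auto
    qed
  next
    show "(\<lambda>i. L!i) ` {..<t} \<subseteq> {x \<in> set L. x < L!t}"
      using ss_nth_less[OF assms(1) _ assms(2)] assms(2) by auto
  qed
  have "inj_on (\<lambda>i. L!i) {..<t}"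
  proof (rule inj_onI)
    fix i j assume "i \<in> {..<t}" "j \<in> {..<t}" "L!i = L!j"
    then show "i = j" using ss_nth_less[OF assms(1), of i j] ss_nth_less[OF assms(1), of j i] assms(2)
      by (auto simp: nat_neq_iff)
  qed
  then show ?thesis using eq card_image by fastforce
qed

theorem mainTheorem2:
  fixes n k :: nat and D :: "bool list"
  assumes "dyck_path n D" and "1 \<le> k" and "k \<le> n"
  shows "bjs_perm n D k = k \<longleftrightarrow>
           \<not> (\<exists>i j. (i, j) \<in> valleys D \<and> i \<le> k \<and> k \<le> j)"
proof -
  define V where "V = valleys D"
  define C where "C = {1..n} - fst`V"
  define R where "R = {1..n} - snd`V"
  define Cl where "Cl = sorted_list_of_set C"
  define Rl where "Rl = sorted_list_of_set R"
  have VP: "\<And>i j. (i,j) \<in> V \<Longrightarrow> 1 \<le> i \<and> i < j \<and> j \<le> n" using vprop2[OF assms(1)] V_def by blast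
  have Vsub: "V \<subseteq> {1..n} \<times> {1..n}" using VP by fastforce
  have finV: "finite V" using Vsub finite_subset by blast
  have injf: "inj_on fst V" and injs: "inj_on snd V" using inj_fst inj_snd V_def by auto
  have finC: "finite C" and finR: "finite R" using C_def R_def by auto
  have setC: "set Cl = C" using Cl_def finC by simp
  have setR: "set Rl = R" using Rl_def finR by simp
  have sC: "sorted_wrt (<) Cl" using Cl_def by (simp add: strict_sorted_list_of_set)
  have sR: "sorted_wrt (<) Rl" using Rl_def by (simp add: strict_sorted_list_of_set)
  have dC: "distinct Cl" using Cl_def by simp
  have Cmem: "\<And>i. i < length Cl \<Longrightarrow> Cl!i \<in> C" using setC nth_mem by blast
  have cr0: "foldl (bjs_step n) V [1..<n+1] = V \<union> {(Cl!i, Rl!i) | i. i < length Cl \<and> Cl!i \<le> n}"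
    using inv[OF Vsub injf injs C_def R_def Cl_def Rl_def] by simp
  have "\<And>i. i < length Cl \<Longrightarrow> Cl!i \<le> n" using Cmem C_def by auto
  then have cr: "bjs_crosses n D = V \<union> {(Cl!i, Rl!i) | i. i < length Cl}"
    using cr0 unfolding bjs_crosses_def V_def by blast
  show ?thesis
  proof (cases "k \<in> fst`V")
    case True
    then obtain j where kj: "(k,j) \<in> V" by force
    have "bjs_perm n D k = j" unfolding bjs_perm_def
    proof (rule the_equality)
      show "(k,j) \<in> bjs_crosses n D" using cr kj by simp
    next
      fix y assume "(k,y) \<in> bjs_crosses n D"
      then have "(k,y) \<in> V \<or> (\<exists>i<length Cl. k = Cl!i)" using cr by auto
      then show "y = j"
      proof
        assume "(k,y) \<in> V" then show ?thesis using injf kj inj_on_eq_iff by fastforce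
      next
        assume "\<exists>i<length Cl. k = Cl!i"
        then obtain i where "i < length Cl" "k = Cl!i" by blast
        then have "k \<in> C" using Cmem by simp
        then show ?thesis using C_def True by simp
      qed
    qed
    moreover have "k < j" using VP kj by blast
    ultimately have "bjs_perm n D k \<noteq> k" by simp
    moreover have "\<exists>i j. (i, j) \<in> valleys D \<and> i \<le> k \<and> k \<le> j"
      using kj \<open>k < j\<close> V_def by (intro exI[of _ k] exI[of _ j]) simp
    ultimately show ?thesis by blast
  next
    case False
    then have "k \<in> C" using C_def assms by auto
    then obtain t where t: "t < length Cl" "Cl!t = k" using setC by (metis in_set_conv_nth)
    have perm: "bjs_perm n D k = Rl!t" unfolding bjs_perm_def
    proof (rule the_equality)
      show "(k, Rl!t) \<in> bjs_crosses n D" using cr t by auto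
    next
      fix y assume "(k,y) \<in> bjs_crosses n D"
      then have "(k,y) \<in> V \<or> (\<exists>i<length Cl. k = Cl!i \<and> y = Rl!i)" using cr by auto
      then show "y = Rl!t"
      proof
        assume "(k,y) \<in> V" then show ?thesis using False by force
      next
        assume "\<exists>i<length Cl. k = Cl!i \<and> y = Rl!i"
        then obtain i where "i < length Cl" "k = Cl!i" "y = Rl!i" by blast
        then show ?thesis using nth_eq_iff_index_eq[OF dC _ t(1)] t(2) by auto
      qed
    qed
    have tC: "card {x \<in> C. x < k} = t" using idx_card[OF sC t(1)] t(2) setC by simp
    have b: "Rl!t = k \<longleftrightarrow> k \<in> R \<and> card {x \<in> R. x < k} = t"
    proof
      assume h: "Rl!t = k"
      have "t < length Rl"
      proof (rule ccontr)
        assume "\<not> t < length Rl"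
        have "fst`V \<subseteq> {1..n}" "snd`V \<subseteq> {1..n}" using Vsub by auto
        moreover have "card (fst`V) = card V" using injf card_image by blast
        moreover have "card (snd`V) = card V" using injs card_image by blast
        ultimately have "length Rl = length Cl"
          using Cl_def Rl_def C_def R_def finC finR by (simp add: card_Diff_subset finite_subset)
        then show False using t \<open>\<not> t < length Rl\<close> by simp
      qed
      then show "k \<in> R \<and> card {x \<in> R. x < k} = t"
        using idx_card[OF sR] h setR nth_mem by fastforce
    next
      assume h: "k \<in> R \<and> card {x \<in> R. x < k} = t"
      then obtain s where "s < length Rl" "Rl!s = k" using setR by (metis in_set_conv_nth)
      then show "Rl!t = k" using idx_card[OF sR, of s] h setR by simp
    qed
    have cntC: "card {x \<in> C. x < k} + card {x \<in> fst`V. x < k} = k - 1"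
    proof -
      have "{x \<in> C. x < k} \<union> {x \<in> fst`V. x < k} = {1..<k}" using C_def Vsub assms by auto
      moreover have "{x \<in> C. x < k} \<inter> {x \<in> fst`V. x < k} = {}" using C_def by auto
      ultimately show ?thesis using finC finV card_Un_disjoint[of "{x \<in> C. x < k}" "{x \<in> fst`V. x < k}"]
        by simp
    qed
    have cntR: "card {x \<in> R. x < k} + card {x \<in> snd`V. x < k} = k - 1"
    proof -
      have "{x \<in> R. x < k} \<union> {x \<in> snd`V. x < k} = {1..<k}" using R_def Vsub assms by auto
      moreover have "{x \<in> R. x < k} \<inter> {x \<in> snd`V. x < k} = {}" using R_def by auto
      ultimately show ?thesis using finR finV card_Un_disjoint[of "{x \<in> R. x < k}" "{x \<in> snd`V. x < k}"]
        by simp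
    qed
    define A1 where "A1 = {v \<in> V. fst v < k}"
    define A2 where "A2 = {v \<in> V. snd v < k}"
    have c1: "card {x \<in> fst`V. x < k} = card A1"
    proof -
      have e: "{x \<in> fst`V. x < k} = fst ` A1" unfolding A1_def by blast
      have "inj_on fst A1" unfolding A1_def by (rule inj_on_subset[OF injf]) blast
      then have "card (fst ` A1) = card A1" by (rule card_image)
      then show ?thesis using e by simp
    qed
    have c2: "card {x \<in> snd`V. x < k} = card A2"
    proof -
      have e: "{x \<in> snd`V. x < k} = snd ` A2" unfolding A2_def by blast
      have "inj_on snd A2" unfolding A2_def by (rule inj_on_subset[OF injs]) blast
      then have "card (snd ` A2) = card A2" by (rule card_image)
      then show ?thesis using e by simp
    qed
    have sub: "A2 \<subseteq> A1" unfolding A1_def A2_def using VP by fastforce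
    have finA1: "finite A1" using finV A1_def by simp
    have m1: "card A1 = card A2 \<longleftrightarrow> A1 = A2" using card_subset_eq[OF finA1 sub] by auto
    have m2: "A1 = A2 \<longleftrightarrow> (\<forall>v\<in>V. fst v < k \<longrightarrow> snd v < k)"
      using sub unfolding A1_def A2_def by auto
    have m3: "k \<in> R \<longleftrightarrow> k \<notin> snd`V" using R_def assms by auto
    have key: "bjs_perm n D k = k \<longleftrightarrow> k \<notin> snd`V \<and> (\<forall>v\<in>V. fst v < k \<longrightarrow> snd v < k)"
    proof -
      have "card {x \<in> R. x < k} = t \<longleftrightarrow> card A1 = card A2"
        using tC cntC cntR c1 c2 by linarith
      then show ?thesis using perm b m1 m2 m3 by simp
    qed
    show ?thesis unfolding key V_def[symmetric]
    proof
      assume h: "k \<notin> snd`V \<and> (\<forall>v\<in>V. fst v < k \<longrightarrow> snd v < k)"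
      show "\<not> (\<exists>i j. (i, j) \<in> V \<and> i \<le> k \<and> k \<le> j)"
      proof
        assume "\<exists>i j. (i, j) \<in> V \<and> i \<le> k \<and> k \<le> j"
        then obtain i j where ij: "(i,j) \<in> V" "i \<le> k" "k \<le> j" by blast
        have "i \<noteq> k" using False ij by force
        moreover have "j \<noteq> k" using h ij by force
        ultimately show False using h ij by force
      qed
    next
      assume h: "\<not> (\<exists>i j. (i, j) \<in> V \<and> i \<le> k \<and> k \<le> j)"
      show "k \<notin> snd`V \<and> (\<forall>v\<in>V. fst v < k \<longrightarrow> snd v < k)"
      proof
        show "k \<notin> snd`V"
        proof
          assume "k \<in> snd`V"
          then obtain i where "(i,k) \<in> V" by force
          then have "(i,k) \<in> V \<and> i \<le> k \<and> k \<le> k" using VP[of i k] by simp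
          then show False using h by blast
        qed
      next
        show "\<forall>v\<in>V. fst v < k \<longrightarrow> snd v < k"
        proof (intro ballI impI)
          fix v assume "v \<in> V" "fst v < k"
          then show "snd v < k" using h by (cases v) (metis fst_conv snd_conv less_imp_le_nat not_less)
        qed
      qed
    qed
  qed
qed

end
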